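(* Let $M^{\circ}=\langle \mathcal{S},\mathcal{A},s_{\text{init}},H,T^{\circ},R^{\circ}\rangle$ be a deterministic episodic MDP (abstract simulator) and let $\eta\in[0,1]$ be a perturbation level. Then the abstract policy $\rho$ returned by the Robust Dynamic Programming procedure $\mathrm{RDP}(M^{\circ},\eta)$ is a robust abstract policy, i.e. \[ \min_{M\in\mathcal{P}(M^{\circ},\eta)} V^{\rho}_{M}=\max_{\psi\in\Psi}\ \min_{M\in\mathcal{P}(M^{\circ},\eta)} V^{\psi}_{M}, \] so that $\rho\in\arg\max_{\psi\in\Psi}\min_{M\in\mathcal{P}(M^{\circ},\eta)}V^{\psi}_{M}$.
   Context: An episodic MDP $M=\langle\mathcal{S},\mathcal{A},s_{\text{init}},H,T,R\rangle$ has finite state space $\mathcal{S}$, finite action space $\mathcal{A}$, fixed initial state $s_{\text{init}}$, horizon $H$, transitions $T_h(\cdot\mid s,a)\in\Delta(\mathcal{S})$ and rewards $R_h(s,a)\in[0,1]$ for $h\in[H]$. It is deterministic if $T_h(s'\mid s,a)\in\{0,1\}$ for all $h,s,a,s'$. An abstract policy is a map $\psi:[H]\times\mathcal{S}\to\mathcal{A}$; $\Psi$ is the set of all such maps; $V^{\psi}_M=\mathbb{E}_{M,\psi}[r_1+\dots+r_H]$ with $s_1=s_{\text{init}}$, $a_h=\psi_h(s_h)$, $r_h=R_h(s_h,a_h)$, $s_{h+1}\sim T_h(\cdot\mid s_h,a_h)$. $\eta$-perturbation: an MDP $M'=\langle\mathcal{S},\mathcal{A},s_{\text{init}},H,T',R'\rangle$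 is an $\eta$-perturbation of $M=\langle\mathcal{S},\mathcal{A},s_{\text{init}},H,T,R\rangle$ if there is $\xi:[H]\times\mathcal{S}\times\mathcal{A}\to\Delta(\mathcal{A})$ with $\xi_h(a\mid s,a)\ge 1-\eta$ for all $h,s,a$ such that $T'_h(s'\mid s,a)=\sum_{a'}T_h(s'\mid s,a')\xi_h(a'\mid s,a)$ and $R'_h(s,a)=\sum_{a'}R_h(s,a')\xi_h(a'\mid s,a)$ for all $h,s,a,s'$. $\mathcal{P}(M,\eta)$ denotes the set of all $\eta$-perturbations of $M$. $\mathrm{RDP}(M^{\circ},\eta)$: set $\tilde V_{H+1}(s)=0$ for all $s$; for $h=H,\dots,1$ set $\tilde Q_h(s,a)=R^{\circ}_h(s,a)+\sum_{s'}T^{\circ}_h(s'\mid s,a)\tilde V_{h+1}(s')$ for all $s,a$ and $\tilde V_h(s)=(1-\eta)\max_a\tilde Q_h(s,a)+\eta\min_a\tilde Q_h(s,a)$ for all $s$; return $\rho$ with $\rho_h(s)\in\arg\max_a\tilde Q_h(s,a)$. *)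

theory Defs
  imports Complex_Main
begin

text \<open>Steps are h = 1..H. T h s a s' is the probability T_h(s' | s, a),
  R h s a is the reward R_h(s,a).\<close>

type_synonym ('s,'a) trans = "nat \<Rightarrow> 's \<Rightarrow> 'a \<Rightarrow> 's \<Rightarrow> real"
type_synonym ('s,'a) rew = "nat \<Rightarrow> 's \<Rightarrow> 'a \<Rightarrow> real"
type_synonym ('s,'a) policy = "nat \<Rightarrow> 's \<Rightarrow> 'a"

definition valid_mdp :: "nat \<Rightarrow> ('s::finite,'a::finite) trans \<Rightarrow> ('s,'a) rew \<Rightarrow> bool" where
  "valid_mdp H T R \<longleftrightarrow>
     (\<forall>h\<in>{1..H}. \<forall>s a. (\<forall>s'. T h s a s' \<ge> 0) \<and> (\<Sum>s'\<in>UNIV. T h s a s') = 1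
        \<and> 0 \<le> R h s a \<and> R h s a \<le> 1)"

definition deterministic_mdp :: "nat \<Rightarrow> ('s::finite,'a::finite) trans \<Rightarrow> bool" where
  "deterministic_mdp H T \<longleftrightarrow> (\<forall>h\<in>{1..H}. \<forall>s a s'. T h s a s' \<in> {0, 1})"

fun state_dist :: "('s::finite,'a) trans \<Rightarrow> 's \<Rightarrow> ('s,'a) policy \<Rightarrow> nat \<Rightarrow> 's \<Rightarrow> real" where
  "state_dist T s0 psi 0 s = 0"
| "state_dist T s0 psi (Suc 0) s = (if s = s0 then 1 else 0)"
| "state_dist T s0 psi (Suc (Suc h)) s' =
     (\<Sum>s\<in>UNIV. state_dist T s0 psi (Suc h) s * T (Suc h) s (psi (Suc h) s) s')"

definition value_fun :: "nat \<Rightarrow> 's \<Rightarrow> ('s::finite,'a) trans \<Rightarrow> ('s,'a) rew \<Rightarrow> ('s,'a) policy \<Rightarrow> real" where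
  "value_fun H s0 T R psi = (\<Sum>h=1..H. \<Sum>s\<in>UNIV. state_dist T s0 psi h s * R h s (psi h s))"

definition perturbations :: "nat \<Rightarrow> ('s::finite,'a::finite) trans \<Rightarrow> ('s,'a) rew \<Rightarrow> real
     \<Rightarrow> (('s,'a) trans \<times> ('s,'a) rew) set" where
  "perturbations H T R \<eta> = {(T', R'). \<exists>xi :: nat \<Rightarrow> 's \<Rightarrow> 'a \<Rightarrow> 'a \<Rightarrow> real.
      (\<forall>h\<in>{1..H}. \<forall>s a. (\<forall>a'. xi h s a a' \<ge> 0) \<and> (\<Sum>a'\<in>UNIV. xi h s a a') = 1
                         \<and> xi h s a a \<ge> 1 - \<eta>) \<and>
      (\<forall>h\<in>{1..H}. \<forall>s a s'. T' h s a s' = (\<Sum>a'\<in>UNIV. T h s a' s' * xi h s a a')) \<and>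
      (\<forall>h\<in>{1..H}. \<forall>s a. R' h s a = (\<Sum>a'\<in>UNIV. R h s a' * xi h s a a'))}"

text \<open>Robust dynamic programming. rdp_V T R \<eta> k s is tilde V_{H+1-k}(s) for a problem of
  horizon H (k = number of remaining steps); rdp_Q is the corresponding tilde Q.\<close>

primrec rdp_Vk :: "nat \<Rightarrow> ('s::finite,'a::finite) trans \<Rightarrow> ('s,'a) rew \<Rightarrow> real \<Rightarrow> nat \<Rightarrow> 's \<Rightarrow> real" where
  "rdp_Vk H T R \<eta> 0 s = 0"
| "rdp_Vk H T R \<eta> (Suc k) s =
     (let Q = (\<lambda>a. R (H - k) s a + (\<Sum>s'\<in>UNIV. T (H - k) s a s' * rdp_Vk H T R \<eta> k s'))
      in (1 - \<eta>) * Max (range Q) + \<eta> * Min (range Q))"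

definition rdp_V :: "nat \<Rightarrow> ('s::finite,'a::finite) trans \<Rightarrow> ('s,'a) rew \<Rightarrow> real \<Rightarrow> nat \<Rightarrow> 's \<Rightarrow> real" where
  "rdp_V H T R \<eta> h s = rdp_Vk H T R \<eta> (H + 1 - h) s"

definition rdp_Q :: "nat \<Rightarrow> ('s::finite,'a::finite) trans \<Rightarrow> ('s,'a) rew \<Rightarrow> real \<Rightarrow> nat \<Rightarrow> 's \<Rightarrow> 'a \<Rightarrow> real" where
  "rdp_Q H T R \<eta> h s a = R h s a + (\<Sum>s'\<in>UNIV. T h s a s' * rdp_V H T R \<eta> (h + 1) s')"

text \<open>rho is a possible output of RDP(M, eta): greedy w.r.t. tilde Q at every step
  (any tie-breaking).\<close>

definition rdp_output :: "nat \<Rightarrow> ('s::finite,'a::finite) trans \<Rightarrow> ('s,'a) rew \<Rightarrow> real \<Rightarrow> ('s,'a) policy \<Rightarrow> bool" where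
  "rdp_output H T R \<eta> rho \<longleftrightarrow>
     (\<forall>h\<in>{1..H}. \<forall>s. \<forall>a. rdp_Q H T R \<eta> h s a \<le> rdp_Q H T R \<eta> h s (rho h s))"

end

theory Submission
  imports Defs
begin

lemma telescope:
  fixes T' :: "('s::finite,'a) trans"
  shows "(\<Sum>h=1..n. \<Sum>s\<in>UNIV. state_dist T' s0 psi h s * R' h s (psi h s)) =
    U 1 s0 - (\<Sum>s\<in>UNIV. state_dist T' s0 psi (Suc n) s * U (Suc n) s)
    + (\<Sum>h=1..n. \<Sum>s\<in>UNIV. state_dist T' s0 psi h s *
        (R' h s (psi h s) + (\<Sum>s'\<in>UNIV. T' h s (psi h s) s' * U (Suc h) s') - U h s))"
proof (induction n)
  case 0
  have "(\<Sum>s\<in>UNIV. state_dist T' s0 psi (Suc 0) s * U (Suc 0) s) = U 1 s0"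
  proof -
    have "\<And>s. state_dist T' s0 psi (Suc 0) s * U (Suc 0) s = (if s = s0 then U 1 s else 0)" by simp
    then show ?thesis by simp
  qed
  then show ?case by simp
next
  case (Suc n)
  let ?d = "state_dist T' s0 psi"
  have key: "(\<Sum>s'\<in>UNIV. ?d (Suc (Suc n)) s' * U (Suc (Suc n)) s')
      = (\<Sum>s\<in>UNIV. ?d (Suc n) s * (\<Sum>s'\<in>UNIV. T' (Suc n) s (psi (Suc n) s) s' * U (Suc (Suc n)) s'))"
  proof -
    have "(\<Sum>s'\<in>UNIV. ?d (Suc (Suc n)) s' * U (Suc (Suc n)) s')
       = (\<Sum>s'\<in>UNIV. \<Sum>s\<in>UNIV. ?d (Suc n) s * T' (Suc n) s (psi (Suc n) s) s' * U (Suc (Suc n)) s')"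
      by (simp only: state_dist.simps sum_distrib_right)
    also have "\<dots> = (\<Sum>s\<in>UNIV. \<Sum>s'\<in>UNIV. ?d (Suc n) s * T' (Suc n) s (psi (Suc n) s) s' * U (Suc (Suc n)) s')"
      by (rule sum.swap)
    also have "\<dots> = (\<Sum>s\<in>UNIV. ?d (Suc n) s * (\<Sum>s'\<in>UNIV. T' (Suc n) s (psi (Suc n) s) s' * U (Suc (Suc n)) s'))"
      by (simp only: sum_distrib_left mult.assoc)
    finally show ?thesis .
  qed
  have e: "(\<Sum>h=1..Suc n. F h) = (\<Sum>h=1..n. F h) + F (Suc n)" for F :: "nat \<Rightarrow> real"
    by simp
  have b: "(\<Sum>s\<in>UNIV. ?d (Suc n) s * (R' (Suc n) s (psi (Suc n) s) + (\<Sum>s'\<in>UNIV. T' (Suc n) s (psi (Suc n) s) s' * U (Suc (Suc n)) s') - U (Suc n) s))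
     = (\<Sum>s\<in>UNIV. ?d (Suc n) s * R' (Suc n) s (psi (Suc n) s)) + (\<Sum>s\<in>UNIV. ?d (Suc n) s * (\<Sum>s'\<in>UNIV. T' (Suc n) s (psi (Suc n) s) s' * U (Suc (Suc n)) s'))
       - (\<Sum>s\<in>UNIV. ?d (Suc n) s * U (Suc n) s)"
    by (simp add: algebra_simps sum.distrib sum_subtractf)
  show ?case
    unfolding e using Suc key b by linarith
qed

lemma dist_nonneg:
  fixes T' :: "('s::finite,'a) trans"
  assumes "\<forall>h\<in>{1..H}. \<forall>s a s'. T' h s a s' \<ge> 0"
  shows "h \<le> H \<Longrightarrow> state_dist T' s0 psi h s \<ge> 0"
proof (induction h arbitrary: s rule: less_induct)
  case (less h)
  show ?case
  proof (cases h)
    case (Suc k)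
    show ?thesis
    proof (cases k)
      case (Suc j)
      have "\<And>x. state_dist T' s0 psi (Suc j) x \<ge> 0" using less Suc \<open>h = Suc k\<close> by auto
      moreover have "\<And>x. T' (Suc j) x (psi (Suc j) x) s \<ge> 0" using assms less.prems Suc \<open>h = Suc k\<close> by auto
      ultimately show ?thesis using Suc \<open>h = Suc k\<close> by (simp add: sum_nonneg)
    qed (simp add: \<open>h = Suc k\<close>)
  qed simp
qed

lemma rdp_V_eq:
  assumes "1 \<le> h" "h \<le> H"
  shows "rdp_V H T R \<eta> h s = (1 - \<eta>) * Max (range (rdp_Q H T R \<eta> h s)) + \<eta> * Min (range (rdp_Q H T R \<eta> h s))"
proof -
  have e: "H + 1 - h = Suc (H - h)" "H - (H - h) = h" "H + 1 - (h + 1) = H - h" using assms by auto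
  show ?thesis unfolding rdp_V_def e(1) rdp_Q_def
    by (simp add: e Let_def)
qed

lemma rdp_V_end: "rdp_V H T R \<eta> (Suc H) s = 0"
  by (simp add: rdp_V_def)

lemma xi_sum_ge:
  fixes xi :: "'a::finite \<Rightarrow> real" and Q :: "'a \<Rightarrow> real"
  assumes "\<forall>a'. xi a' \<ge> 0" "sum xi UNIV = 1" "xi a \<ge> 1 - \<eta>" "\<forall>c. Q c \<le> Q a"
  shows "(\<Sum>a'\<in>UNIV. Q a' * xi a') \<ge> (1 - \<eta>) * Max (range Q) + \<eta> * Min (range Q)"
proof -
  define m where "m = Min (range Q)"
  have mx: "Max (range Q) = Q a" using assms(4) by (intro Max_eqI) auto
  have mn: "m \<le> Q c" for c unfolding m_def by (intro Min_le) auto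
  have "(Q a - m) * xi a \<le> (\<Sum>a'\<in>UNIV. (Q a' - m) * xi a')"
    by (rule member_le_sum) (use mn assms(1) in auto)
  also have "(\<Sum>a'\<in>UNIV. (Q a' - m) * xi a') = (\<Sum>a'\<in>UNIV. Q a' * xi a') - m"
    using assms(2) by (simp add: algebra_simps sum_subtractf sum_distrib_left[symmetric])
  finally have 1: "(Q a - m) * xi a + m \<le> (\<Sum>a'\<in>UNIV. Q a' * xi a')" by simp
  have "(Q a - m) * (1 - \<eta>) \<le> (Q a - m) * xi a"
    using mn[of a] assms(3) by (intro mult_left_mono) auto
  with 1 show ?thesis unfolding mx m_def[symmetric] by (simp add: algebra_simps)
qed

lemma perturb_identity:
  fixes T :: "('s::finite,'a::finite) trans"
  assumes "\<forall>s'. T' h s a s' = (\<Sum>a'\<in>UNIV. T h s a' s' * xi a')"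
    and "R' h s a = (\<Sum>a'\<in>UNIV. R h s a' * xi a')"
  shows "R' h s a + (\<Sum>s'\<in>UNIV. T' h s a s' * rdp_V H T R \<eta> (Suc h) s')
    = (\<Sum>a'\<in>UNIV. rdp_Q H T R \<eta> h s a' * xi a')"
proof -
  have "(\<Sum>s'\<in>UNIV. T' h s a s' * rdp_V H T R \<eta> (Suc h) s')
     = (\<Sum>s'\<in>UNIV. \<Sum>a'\<in>UNIV. T h s a' s' * xi a' * rdp_V H T R \<eta> (Suc h) s')"
    using assms(1) by (simp add: sum_distrib_right)
  also have "\<dots> = (\<Sum>a'\<in>UNIV. xi a' * (\<Sum>s'\<in>UNIV. T h s a' s' * rdp_V H T R \<eta> (Suc h) s'))"
    by (subst sum.swap) (simp add: sum_distrib_left algebra_simps)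
  finally show ?thesis using assms(2)
    by (simp add: rdp_Q_def algebra_simps sum.distrib)
qed

lemma value_tele:
  fixes T' :: "('s::finite,'a) trans"
  shows "value_fun H s0 T' R' psi = rdp_V H T R \<eta> 1 s0
    + (\<Sum>h=1..H. \<Sum>s\<in>UNIV. state_dist T' s0 psi h s *
        (R' h s (psi h s) + (\<Sum>s'\<in>UNIV. T' h s (psi h s) s' * rdp_V H T R \<eta> (Suc h) s') - rdp_V H T R \<eta> h s))"
  unfolding value_fun_def telescope[where U = "rdp_V H T R \<eta>"] by (simp add: rdp_V_end)

lemma pert_props:
  fixes T :: "('s::finite,'a::finite) trans"
  assumes "(T', R') \<in> perturbations H T R \<eta>" "valid_mdp H T R"
  obtains xi where
    "\<And>h s a. h \<in> {1..H} \<Longrightarrow> (\<forall>a'. xi h s a a' \<ge> 0) \<and> (\<Sum>a'\<in>UNIV. xi h s a a') = 1 \<and> xi h s a a \<ge> 1 - \<eta>"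
    "\<And>h s a. h \<in> {1..H} \<Longrightarrow> \<forall>s'. T' h s a s' = (\<Sum>a'\<in>UNIV. T h s a' s' * xi h s a a')"
    "\<And>h s a. h \<in> {1..H} \<Longrightarrow> R' h s a = (\<Sum>a'\<in>UNIV. R h s a' * xi h s a a')"
    "\<And>h s a s'. h \<in> {1..H} \<Longrightarrow> T' h s a s' \<ge> 0"
    "\<And>h s a. h \<in> {1..H} \<Longrightarrow> R' h s a \<ge> 0"
proof -
  from assms(1) obtain xi where
    x1: "\<forall>h\<in>{1..H}. \<forall>s a. (\<forall>a'. xi h s a a' \<ge> 0) \<and> (\<Sum>a'\<in>UNIV. xi h s a a') = 1 \<and> xi h s a a \<ge> 1 - \<eta>"
    and x2: "\<forall>h\<in>{1..H}. \<forall>s a s'. T' h s a s' = (\<Sum>a'\<in>UNIV. T h s a' s' * xi h s a a')"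
    and x3: "\<forall>h\<in>{1..H}. \<forall>s a. R' h s a = (\<Sum>a'\<in>UNIV. R h s a' * xi h s a a')"
    unfolding perturbations_def by auto
  show ?thesis
  proof (rule that[of xi])
    show "T' h s a s' \<ge> 0" if "h \<in> {1..H}" for h s a s'
      using x1 x2 assms(2) that unfolding valid_mdp_def by (auto intro!: sum_nonneg)
    show "R' h s a \<ge> 0" if "h \<in> {1..H}" for h s a
      using x1 x3 assms(2) that unfolding valid_mdp_def by (auto intro!: sum_nonneg)
  qed (use x1 x2 x3 in auto)
qed

theorem theorem1:
  fixes H :: nat and s_init :: "'s::finite"
    and T :: "('s, 'a::finite) trans" and R :: "('s, 'a) rew"
    and \<eta> :: real and rho :: "('s, 'a) policy"
  assumes "valid_mdp H T R"
    and "deterministic_mdp H T"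
    and "0 \<le> \<eta>" and "\<eta> \<le> 1"
    and "rdp_output H T R \<eta> rho"
  shows "(INF M\<in>perturbations H T R \<eta>. value_fun H s_init (fst M) (snd M) rho)
         = (SUP psi. INF M\<in>perturbations H T R \<eta>. value_fun H s_init (fst M) (snd M) psi)"
proof -
  let ?P = "perturbations H T R \<eta>"
  let ?Q = "rdp_Q H T R \<eta>"
  let ?V = "rdp_V H T R \<eta>"
  let ?c = "?V 1 s_init"
  let ?val = "\<lambda>psi M. value_fun H s_init (fst M) (snd M) psi"
  define amin where "amin h s = (SOME b. ?Q h s b = Min (range (?Q h s)))" for h s
  have amin: "?Q h s (amin h s) = Min (range (?Q h s))" for h s
  proof -
    have "Min (range (?Q h s)) \<in> range (?Q h s)" by (intro Min_in) auto
    then obtain b where "?Q h s b = Min (range (?Q h s))" by (metis rangeE)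
    then show ?thesis unfolding amin_def by (rule someI)
  qed
  define xi0 where "xi0 h s a a' = (1 - \<eta>) * (if a' = a then 1 else 0) + \<eta> * (if a' = amin h s then 1 else (0::real))"
    for h s and a a' :: 'a
  have xisum: "(\<Sum>a'\<in>UNIV. f a' * xi0 h s a a') = (1 - \<eta>) * f a + \<eta> * f (amin h s)" for f :: "'a \<Rightarrow> real" and h s a
  proof -
    have "\<And>a'. f a' * xi0 h s a a' = (1 - \<eta>) * (if a' = a then f a' else 0) + \<eta> * (if a' = amin h s then f a' else 0)"
      unfolding xi0_def by (simp add: algebra_simps)
    then show ?thesis by (simp add: sum.distrib sum_distrib_left[symmetric])
  qed
  define T0 where "T0 h s a s' = (\<Sum>a'\<in>UNIV. T h s a' s' * xi0 h s a a')" for h s a s'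
  define R0 where "R0 h s a = (\<Sum>a'\<in>UNIV. R h s a' * xi0 h s a a')" for h s a
  have M0: "(T0, R0) \<in> ?P"
  proof -
    have "(\<Sum>a'\<in>UNIV. xi0 h s a a') = 1" for h s a
      using xisum[of "\<lambda>_. 1" h s a] by simp
    moreover have "xi0 h s a a' \<ge> 0" for h s a a' using assms(3,4) unfolding xi0_def by auto
    moreover have "xi0 h s a a \<ge> 1 - \<eta>" for h s a using assms(3,4) unfolding xi0_def by auto
    ultimately have "(\<forall>h\<in>{1..H}. \<forall>s a. (\<forall>a'. xi0 h s a a' \<ge> 0) \<and> (\<Sum>a'\<in>UNIV. xi0 h s a a') = 1
                         \<and> xi0 h s a a \<ge> 1 - \<eta>) \<and>
      (\<forall>h\<in>{1..H}. \<forall>s a s'. T0 h s a s' = (\<Sum>a'\<in>UNIV. T h s a' s' * xi0 h s a a')) \<and>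
      (\<forall>h\<in>{1..H}. \<forall>s a. R0 h s a = (\<Sum>a'\<in>UNIV. R h s a' * xi0 h s a a'))"
      unfolding T0_def R0_def by simp
    then show ?thesis unfolding perturbations_def by auto
  qed
  have ne: "?P \<noteq> {}" using M0 by auto
  have nonneg: "0 \<le> ?val psi M" if "M \<in> ?P" for psi M
  proof -
    obtain T' R' where M: "M = (T', R')" by (cases M)
    have MP: "(T', R') \<in> ?P" using that M by simp
    obtain xi where
      x1: "\<And>h s a. h \<in> {1..H} \<Longrightarrow> (\<forall>a'. xi h s a a' \<ge> 0) \<and> (\<Sum>a'\<in>UNIV. xi h s a a') = 1 \<and> xi h s a a \<ge> 1 - \<eta>"
      and x2: "\<And>h s a. h \<in> {1..H} \<Longrightarrow> \<forall>s'. T' h s a s' = (\<Sum>a'\<in>UNIV. T h s a' s' * xi h s a a')"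
      and x3: "\<And>h s a. h \<in> {1..H} \<Longrightarrow> R' h s a = (\<Sum>a'\<in>UNIV. R h s a' * xi h s a a')"
      and x4: "\<And>h s a s'. h \<in> {1..H} \<Longrightarrow> T' h s a s' \<ge> 0"
      and x5: "\<And>h s a. h \<in> {1..H} \<Longrightarrow> R' h s a \<ge> 0"
      using pert_props[OF MP assms(1)] by blast
    have "0 \<le> state_dist T' s_init psi h s * R' h s (psi h s)" if "h \<in> {1..H}" for h s
      using dist_nonneg[of H T' h s_init psi s] x4 x5[of h] that by (intro mult_nonneg_nonneg) auto
    then show ?thesis unfolding M value_fun_def fst_conv snd_conv
      by (intro sum_nonneg) auto
  qed
  have rho_ge: "?c \<le> ?val rho M" if "M \<in> ?P" for M
  proof -
    obtain T' R' where M: "M = (T', R')" by (cases M)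
    have MP: "(T', R') \<in> ?P" using that M by simp
    obtain xi where
      x1: "\<And>h s a. h \<in> {1..H} \<Longrightarrow> (\<forall>a'. xi h s a a' \<ge> 0) \<and> (\<Sum>a'\<in>UNIV. xi h s a a') = 1 \<and> xi h s a a \<ge> 1 - \<eta>"
      and x2: "\<And>h s a. h \<in> {1..H} \<Longrightarrow> \<forall>s'. T' h s a s' = (\<Sum>a'\<in>UNIV. T h s a' s' * xi h s a a')"
      and x3: "\<And>h s a. h \<in> {1..H} \<Longrightarrow> R' h s a = (\<Sum>a'\<in>UNIV. R h s a' * xi h s a a')"
      and x4: "\<And>h s a s'. h \<in> {1..H} \<Longrightarrow> T' h s a s' \<ge> 0"
      and x5: "\<And>h s a. h \<in> {1..H} \<Longrightarrow> R' h s a \<ge> 0"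
      using pert_props[OF MP assms(1)] by blast
    have br: "0 \<le> R' h s (rho h s) + (\<Sum>s'\<in>UNIV. T' h s (rho h s) s' * ?V (Suc h) s') - ?V h s"
      if h: "h \<in> {1..H}" for h s
    proof -
      have "R' h s (rho h s) + (\<Sum>s'\<in>UNIV. T' h s (rho h s) s' * ?V (Suc h) s')
          = (\<Sum>a'\<in>UNIV. ?Q h s a' * xi h s (rho h s) a')"
        by (rule perturb_identity) (use x2 x3 h in auto)
      moreover have "(\<Sum>a'\<in>UNIV. ?Q h s a' * xi h s (rho h s) a') \<ge> (1 - \<eta>) * Max (range (?Q h s)) + \<eta> * Min (range (?Q h s))"
        by (rule xi_sum_ge[where xi = "xi h s (rho h s)" and Q = "?Q h s" and a = "rho h s"])
           (use x1[OF h] assms(5) h in \<open>auto simp: rdp_output_def\<close>)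
      moreover have "?V h s = (1 - \<eta>) * Max (range (?Q h s)) + \<eta> * Min (range (?Q h s))"
        using h by (intro rdp_V_eq) auto
      ultimately show ?thesis by simp
    qed
    have "0 \<le> state_dist T' s_init rho h s * (R' h s (rho h s) + (\<Sum>s'\<in>UNIV. T' h s (rho h s) s' * ?V (Suc h) s') - ?V h s)"
      if "h \<in> {1..H}" for h s
      using dist_nonneg[of H T' h s_init rho s] x4 br[of h s] that by (intro mult_nonneg_nonneg) auto
    then have "0 \<le> (\<Sum>h=1..H. \<Sum>s\<in>UNIV. state_dist T' s_init rho h s * (R' h s (rho h s) + (\<Sum>s'\<in>UNIV. T' h s (rho h s) s' * ?V (Suc h) s') - ?V h s))"
      by (intro sum_nonneg) auto
    then show ?thesis unfolding M fst_conv snd_conv value_tele[where T = T and R = R and \<eta> = \<eta>]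
      by simp
  qed
  have psi_le: "?val psi (T0, R0) \<le> ?c" for psi
  proof -
    have br: "R0 h s (psi h s) + (\<Sum>s'\<in>UNIV. T0 h s (psi h s) s' * ?V (Suc h) s') - ?V h s \<le> 0"
      if h: "h \<in> {1..H}" for h s
    proof -
      have "R0 h s (psi h s) + (\<Sum>s'\<in>UNIV. T0 h s (psi h s) s' * ?V (Suc h) s')
          = (\<Sum>a'\<in>UNIV. ?Q h s a' * xi0 h s (psi h s) a')"
        by (rule perturb_identity) (auto simp: T0_def R0_def)
      also have "\<dots> = (1 - \<eta>) * ?Q h s (psi h s) + \<eta> * Min (range (?Q h s))"
        by (simp add: xisum amin)
      also have "\<dots> \<le> (1 - \<eta>) * Max (range (?Q h s)) + \<eta> * Min (range (?Q h s))"
        using assms(4) by (auto intro!: mult_left_mono Max_ge)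
      also have "\<dots> = ?V h s"
        using h by (intro rdp_V_eq[symmetric]) auto
      finally show ?thesis by simp
    qed
    have x4: "T0 h s a s' \<ge> 0" if "h \<in> {1..H}" for h s a s'
      unfolding T0_def using assms(1,3,4) that
      by (intro sum_nonneg mult_nonneg_nonneg) (auto simp: valid_mdp_def xi0_def)
    have "state_dist T0 s_init psi h s * (R0 h s (psi h s) + (\<Sum>s'\<in>UNIV. T0 h s (psi h s) s' * ?V (Suc h) s') - ?V h s) \<le> 0"
      if "h \<in> {1..H}" for h s
      using dist_nonneg[of H T0 h s_init psi s] x4 br[of h s] that by (intro mult_nonneg_nonpos) auto
    then have "(\<Sum>h=1..H. \<Sum>s\<in>UNIV. state_dist T0 s_init psi h s * (R0 h s (psi h s) + (\<Sum>s'\<in>UNIV. T0 h s (psi h s) s' * ?V (Suc h) s') - ?V h s)) \<le> 0"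
      by (intro sum_nonpos) auto
    then show ?thesis unfolding fst_conv snd_conv value_tele[where T = T and R = R and \<eta> = \<eta>]
      by simp
  qed
  have inf_psi: "(INF M\<in>?P. ?val psi M) \<le> ?c" for psi
  proof -
    have "(INF M\<in>?P. ?val psi M) \<le> ?val psi (T0, R0)"
      by (rule cINF_lower) (use M0 nonneg in \<open>auto intro!: bdd_belowI2\<close>)
    with psi_le[of psi] show ?thesis by linarith
  qed
  have inf_rho: "?c \<le> (INF M\<in>?P. ?val rho M)"
    by (rule cINF_greatest) (use ne rho_ge in auto)
  have sup_le: "(SUP psi. INF M\<in>?P. ?val psi M) \<le> ?c"
    by (rule cSUP_least) (use inf_psi in auto)
  have "(INF M\<in>?P. ?val rho M) \<le> (SUP psi. INF M\<in>?P. ?val psi M)"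
    by (rule cSUP_upper) (use inf_psi in \<open>auto intro!: bdd_aboveI2\<close>)
  with sup_le inf_rho show ?thesis by linarith
qed

end
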